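(* Let $D>0$ be an integer with $D\equiv0$ or $1\pmod 4$, let $\varepsilon\in\{\pm1\}$, let $m\in\mathbb{Z}_{>0}$, and suppose $v\in\mathbb{Z}$ satisfies $v^2=m(mD+4\varepsilon)$. Then $m$ is a perfect square. *)

theory Defs
  imports Main
begin

end

theory Submission
  imports Defs "HOL-Computational_Algebra.Nth_Powers"
begin

lemma sq_coprime_int:
  fixes a b c :: int
  assumes "coprime a b" "a > 0" "b > 0" "a * b = c ^ 2"
  shows "\<exists>k. a = k ^ 2"
proof -
  have cp: "coprime (nat a) (nat b)"
    using assms(1-3) by (metis coprime_int_iff nat_0_le less_imp_le)
  have "int (nat a * nat b) = int (nat \<bar>c\<bar> ^ 2)"
    using assms by simp
  hence "nat a * nat b = nat \<bar>c\<bar> ^ 2" by (simp only: of_nat_eq_iff)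
  hence "is_nth_power 2 (nat a * nat b)" by auto
  hence "is_nth_power 2 (nat a)"
    using is_nth_power_mult_coprime_natD(1)[OF cp] assms by simp
  then obtain k where "nat a = k ^ 2" by (auto elim: is_nth_powerE)
  hence "a = int k ^ 2" using assms(2) by (metis of_nat_power int_nat_eq less_le_not_le)
  thus ?thesis by blast
qed

lemma coprime_lin:
  fixes a D c :: int
  assumes "coprime a c"
  shows "coprime a (a * D + c)"
proof (rule coprimeI)
  fix d assume "d dvd a" "d dvd a * D + c"
  hence "d dvd c" by (metis dvd_add_right_iff dvd_mult2)
  with \<open>d dvd a\<close> assms show "is_unit d" using coprime_common_divisor by blast
qed

theorem mainTheorem9:
  fixes D m v \<epsilon> :: int
  assumes "D > 0"
    and "D mod 4 = 0 \<or> D mod 4 = 1"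
    and "\<epsilon> \<in> {1, -1}"
    and "m > 0"
    and "v ^ 2 = m * (m * D + 4 * \<epsilon>)"
  shows "\<exists>k::int. m = k ^ 2"
proof -
  have eu: "is_unit \<epsilon>" using assms(3) by auto
  define b where "b = m * D + 4 * \<epsilon>"
  have "m * b \<ge> 0" using assms(5) b_def by (metis zero_le_power2)
  hence "b \<ge> 0" using assms(4) by (simp add: zero_le_mult_iff)
  show ?thesis
  proof (cases "b = 0")
    case True
    have "m * D > 0" using assms(1,4) by simp
    hence "m * D = 4" "\<epsilon> = -1" using True assms(3) b_def by (auto simp: algebra_simps)
    hence "m dvd 4" by (metis dvd_triv_left)
    hence "m \<le> 4" using zdvd_imp_le by simp
    have "m = 1 \<or> m = 2 \<or> m = 3 \<or> m = 4" using \<open>m \<le> 4\<close> assms(4) by auto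
    moreover have "m \<noteq> 3" using \<open>m dvd 4\<close> by auto
    moreover have "m \<noteq> 2" using \<open>m * D = 4\<close> assms(2) by auto
    ultimately have "m = 1 \<or> m = 4" by auto
    thus ?thesis by (metis power2_eq_square mult_1 numeral_times_numeral semiring_norm(12) semiring_norm(13))
  next
    case False
    hence bp: "b > 0" using \<open>b \<ge> 0\<close> by simp
    show ?thesis
    proof (cases "odd m")
      case True
      have "coprime m (2^2)" using True by (metis coprime_power_right_iff coprime_right_2_iff_odd)
      hence "coprime m (4 * \<epsilon>)" using is_unit_right_imp_coprime[OF eu] by simp
      hence "coprime m b" unfolding b_def by (rule coprime_lin)
      thus ?thesis using sq_coprime_int assms(4,5) bp b_def by metis
    next
      case False
      then obtain a where ma: "m = 2 * a" by blast
      have ap: "a > 0" using ma assms(4) by simp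
      have "even (v^2)" using assms(5) ma by simp
      then obtain w where vw: "v = 2 * w" by auto
      show ?thesis
      proof (cases "odd a")
        case True
        define c where "c = a * D + 2 * \<epsilon>"
        have "4 * w^2 = 4 * (a * c)" using assms(5) ma vw c_def by (simp add: algebra_simps power2_eq_square)
        hence ac: "a * c = w^2" by simp
        have cp0: "c > 0" using bp b_def ma c_def by simp
        have "coprime a 2" using True by simp
        hence "coprime a (2 * \<epsilon>)" using is_unit_right_imp_coprime[OF eu] by simp
        hence cp: "coprime a c" unfolding c_def by (rule coprime_lin)
        obtain k where k: "a = k^2" using sq_coprime_int[OF cp ap cp0 ac] by blast
        obtain l where l: "c = l^2" using sq_coprime_int[of c a w] cp ap cp0 ac
          by (metis coprime_commute mult.commute)
        have "odd k" using True k by simp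
        then obtain s where s: "k = 2 * s + 1" by (metis oddE)
        have "k^2 = 4 * (s^2 + s) + 1" using s by (simp add: algebra_simps power2_eq_square)
        hence "l^2 = (D + 2 * \<epsilon>) + ((s^2+s) * D) * 4" using l k c_def by (simp add: algebra_simps)
        hence lm: "l^2 mod 4 = (D + 2 * \<epsilon>) mod 4" by (simp only: mod_mult_self1)
        have "l^2 mod 4 = 0 \<or> l^2 mod 4 = 1"
        proof (cases "even l")
          case True then obtain t where "l = 2 * t" by blast
          hence "l^2 = 4 * t^2" by (simp add: power2_eq_square)
          thus ?thesis by simp
        next
          case False then obtain t where "l = 2 * t + 1" by (metis oddE)
          hence "l^2 = 1 + (t^2 + t) * 4" by (simp add: algebra_simps power2_eq_square)
          hence "l^2 mod 4 = 1 mod 4" by (simp only: mod_mult_self1)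
          thus ?thesis by simp
        qed
        with lm have dd: "(D + 2 * \<epsilon>) mod 4 = 0 \<or> (D + 2 * \<epsilon>) mod 4 = 1" by simp
        have e: "\<epsilon> = 1 \<or> \<epsilon> = -1" using assms(3) by simp
        have False using dd e assms(2) by presburger
        thus ?thesis ..
      next
        case False
        then obtain a' where aa: "a = 2 * a'" by blast
        have ap': "a' > 0" using aa ap by simp
        define c where "c = a' * D + \<epsilon>"
        have w2: "w^2 = 4 * (a' * c)" using assms(5) ma vw aa c_def
          by (simp add: algebra_simps power2_eq_square)
        hence "even (w^2)" by simp
        then obtain u where wu: "w = 2 * u" by auto
        have ac: "a' * c = u^2" using w2 wu by (simp add: power2_eq_square)
        have cp0: "c > 0" using bp b_def ma aa c_def by simp
        have "coprime a' \<epsilon>" using eu by (metis is_unit_right_imp_coprime)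
        hence cp: "coprime a' c" unfolding c_def by (rule coprime_lin)
        obtain k where k: "a' = k^2" using sq_coprime_int[OF cp ap' cp0 ac] by blast
        have "m = (2 * k)^2" using ma aa k by (simp add: power2_eq_square)
        thus ?thesis by blast
      qed
    qed
  qed
qed

end
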